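(* Let $\mathcal G$ be a strongly connected directed graph with no self loops, vertex set $\mathcal V=\{1,\dots,n\}$ and edge set $\mathcal E=\{1,\dots,m\}$. Let $B=S-D\in\mathbb{R}^{n\times m}$ be its incidence matrix, let $Q=DB^\mathsf{T}$, and let $W=\mathbf{1}z^\mathsf{T}$ and $Q^\ddagger$ be as defined in the context. Let $\omega^{\mathrm u}\in\mathbb{R}^n$ be a constant vector. Consider the dynamics \[ \dot{\tilde\theta}(t)=\omega^{\mathrm u}+c(t),\qquad \tilde\beta(t)=B^\mathsf{T}\tilde\theta(t),\qquad y(t)=D\tilde\beta(t). \] Let $\mathcal T\subset\mathcal E$ be an outward directed spanning tree with root $r$. Let $g_1,\dots,g_{n-1}$ be an ordering of the edges of $\mathcal T$ consistent with the tree order, i.e. $g_a\prec g_b$ implies $a<b$. Let $k>0$ and $k_2>0$. Let $0<t_1<t_2<\dots<t_n$ satisfy $t_{j+1}-t_j>|\tilde\beta_{g_j}(t_j)|/k_2$ for $j=1,\dots,n-1$. For each $i\neq r$, let $j(i)$ denote the unique index with $\mathrm{dst}(g_{j(i)})=i$. Let the control be defined, for each node $i\in\mathcal V$, by \[ c_i(t)=\begin{cases} k\,y_i(t) & \text{if } t<t_1,\\ k\,y_i(t_1)+k_2\,\mathrm{sign}\big(\tilde\beta_{g_{j(i)}}(t)\big) & \text{if } i\neq r \text{ and } t_{j(i)}\le t<t_{j(i)+1},\\ k\,y_i(t_1) & \text{otherwise.}\end{cases} \] Assume that at time $t_1$ the system has converged, in the sense that \[ \tilde\beta(t_1)=-k^{-1}B^\mathsf{T}Q^\ddagger\omega^{\mathrm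 u} \qquad\text{and}\qquad \omega^{\mathrm u}+k\,y(t_1)=W\omega^{\mathrm u}. \] Then $\tilde\beta(t_n)=0$.
   Context: For an edge $e$, $\mathrm{src}(e)$ and $\mathrm{dst}(e)$ denote its source and destination vertices. The matrices $S,D\in\mathbb{R}^{n\times m}$ are defined by $S_{ie}=1$ if node $i$ is the source of edge $e$ and $0$ otherwise, and $D_{ie}=1$ if node $i$ is the destination of edge $e$ and $0$ otherwise. The vector $\mathbf{1}$ is the all-ones vector. The matrix $Q=DB^\mathsf{T}$ is an irreducible rate matrix (nonnegative off-diagonal entries, zero row sums). Let $z>0$ be its left eigenvector for eigenvalue $0$ ($z^\mathsf{T}Q=0$), normalized so that $\mathbf{1}^\mathsf{T}z=1$, and set $W=\mathbf{1}z^\mathsf{T}$. Write $Q=T\begin{bmatrix}0&0\\0&\Lambda\end{bmatrix}T^{-1}$, where $T$ is invertible with first column $\mathbf{1}$, the first row of $T^{-1}$ is $z^\mathsf{T}$, and $\Lambda\in\mathbb{R}^{(n-1)\times(n-1)}$ is invertible. Define $Q^\ddagger=T\begin{bmatrix}0&0\\0&\Lambda^{-1}\end{bmatrix}T^{-1}$. An outward directed spanning tree with root $r$ is a set $\mathcal T$ of $n-1$ edges such that every vertex is reachable from $r$ by a directed path in $\mathcal T$, and each vertex other than $r$ is the destination of exactly one edge of $\mathcal T$. For $f,g\in\mathcal T$, $f\prec g$ means there is a directed walk of nonzero length in $\mathcal T$ from $\mathrm{dst}(f)$ to $\mathrm{dst}(g)$. The convention $\mathrm{sign}(0)=0$ is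 used. Here $\tilde\theta(t)\in\mathbb{R}^n$ are normalized clock phases, $\tilde\beta(t)\in\mathbb{R}^m$ are buffer occupancies relative to the desired offsets, and $\omega(t)=\omega^{\mathrm u}+c(t)$ is the frequency. *)

theory Defs
  imports "HOL-Analysis.Analysis" "Jordan_Normal_Form.Matrix"
begin

(* Graph: vertices 0..<n, edges 0..<m, edge e goes from src e to dst e. *)

definition edge_rel :: "(nat \<Rightarrow> nat) \<Rightarrow> (nat \<Rightarrow> nat) \<Rightarrow> nat set \<Rightarrow> (nat \<times> nat) set" where
  "edge_rel src dst E = {(src e, dst e) | e. e \<in> E}"

definition strongly_connected :: "nat \<Rightarrow> nat \<Rightarrow> (nat \<Rightarrow> nat) \<Rightarrow> (nat \<Rightarrow> nat) \<Rightarrow> bool" where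
  "strongly_connected n m src dst \<longleftrightarrow>
     (\<forall>i<n. \<forall>j<n. (i, j) \<in> (edge_rel src dst {..<m})\<^sup>*)"

definition S_mat :: "nat \<Rightarrow> nat \<Rightarrow> (nat \<Rightarrow> nat) \<Rightarrow> real mat" where
  "S_mat n m src = mat n m (\<lambda>(i, e). if src e = i then 1 else 0)"

definition D_mat :: "nat \<Rightarrow> nat \<Rightarrow> (nat \<Rightarrow> nat) \<Rightarrow> real mat" where
  "D_mat n m dst = mat n m (\<lambda>(i, e). if dst e = i then 1 else 0)"

definition B_mat :: "nat \<Rightarrow> nat \<Rightarrow> (nat \<Rightarrow> nat) \<Rightarrow> (nat \<Rightarrow> nat) \<Rightarrow> real mat" where
  "B_mat n m src dst = S_mat n m src - D_mat n m dst"

definition Q_mat :: "nat \<Rightarrow> nat \<Rightarrow> (nat \<Rightarrow> nat) \<Rightarrow> (nat \<Rightarrow> nat) \<Rightarrow> real mat" where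
  "Q_mat n m src dst = D_mat n m dst * transpose_mat (B_mat n m src dst)"

definition out_spanning_tree ::
  "nat \<Rightarrow> nat \<Rightarrow> (nat \<Rightarrow> nat) \<Rightarrow> (nat \<Rightarrow> nat) \<Rightarrow> nat set \<Rightarrow> nat \<Rightarrow> bool" where
  "out_spanning_tree n m src dst Tr r \<longleftrightarrow>
     Tr \<subseteq> {..<m} \<and> card Tr = n - 1 \<and> r < n \<and>
     (\<forall>i<n. (r, i) \<in> (edge_rel src dst Tr)\<^sup>*) \<and>
     (\<forall>i<n. i \<noteq> r \<longrightarrow> (\<exists>!e. e \<in> Tr \<and> dst e = i))"

definition tree_prec :: "(nat \<Rightarrow> nat) \<Rightarrow> (nat \<Rightarrow> nat) \<Rightarrow> nat set \<Rightarrow> nat \<Rightarrow> nat \<Rightarrow> bool" where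
  "tree_prec src dst Tr f g \<longleftrightarrow> (dst f, dst g) \<in> (edge_rel src dst Tr)\<^sup>+"

definition blk0 :: "nat \<Rightarrow> real mat \<Rightarrow> real mat" where
  "blk0 n L = four_block_mat (0\<^sub>m 1 1) (0\<^sub>m 1 (n - 1)) (0\<^sub>m (n - 1) 1) L"

definition beta_of :: "nat \<Rightarrow> nat \<Rightarrow> (nat \<Rightarrow> nat) \<Rightarrow> (nat \<Rightarrow> nat) \<Rightarrow> (real \<Rightarrow> nat \<Rightarrow> real) \<Rightarrow> real \<Rightarrow> real vec" where
  "beta_of n m src dst \<theta> t = transpose_mat (B_mat n m src dst) *\<^sub>v vec n (\<theta> t)"

definition y_of :: "nat \<Rightarrow> nat \<Rightarrow> (nat \<Rightarrow> nat) \<Rightarrow> (nat \<Rightarrow> nat) \<Rightarrow> (real \<Rightarrow> nat \<Rightarrow> real) \<Rightarrow> real \<Rightarrow> real vec" where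
  "y_of n m src dst \<theta> t = D_mat n m dst *\<^sub>v beta_of n m src dst \<theta> t"

definition jidx :: "nat \<Rightarrow> (nat \<Rightarrow> nat) \<Rightarrow> (nat \<Rightarrow> nat) \<Rightarrow> nat \<Rightarrow> nat" where
  "jidx n dst g i = (THE j. j \<in> {1..n - 1} \<and> dst (g j) = i)"

(* the control law c_i(t); sgn on reals satisfies sgn 0 = 0 *)
definition ctrl ::
  "nat \<Rightarrow> nat \<Rightarrow> (nat \<Rightarrow> nat) \<Rightarrow> (nat \<Rightarrow> nat) \<Rightarrow> nat \<Rightarrow> (nat \<Rightarrow> nat) \<Rightarrow> (nat \<Rightarrow> real)
   \<Rightarrow> real \<Rightarrow> real \<Rightarrow> (real \<Rightarrow> nat \<Rightarrow> real) \<Rightarrow> nat \<Rightarrow> real \<Rightarrow> real" where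
  "ctrl n m src dst r g tt k k2 \<theta> i t =
     (if t < tt 1 then k * (y_of n m src dst \<theta> t $ i)
      else if i \<noteq> r \<and> tt (jidx n dst g i) \<le> t \<and> t < tt (jidx n dst g i + 1)
        then k * (y_of n m src dst \<theta> (tt 1) $ i)
             + k2 * sgn (beta_of n m src dst \<theta> t $ g (jidx n dst g i))
      else k * (y_of n m src dst \<theta> (tt 1) $ i))"

end

theory Submission
  imports Defs
begin


lemma incr_countable:
  fixes f :: "real \<Rightarrow> real"
  assumes ab: "a \<le> b" and cont: "continuous_on {a..b} f" and K: "countable K"
    and der: "\<And>x. x \<in> {a<..<b} - K \<Longrightarrow> \<exists>d>0. (f has_real_derivative d) (at x)"
  shows "f a \<le> f b"
proof (rule ccontr)
  assume "\<not> f a \<le> f b"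
  hence lt: "f b < f a" by simp
  have unc: "uncountable {f b<..<f a}" using uncountable_open_interval lt by blast
  have "{f b<..<f a} - f ` K \<noteq> {}"
  proof
    assume "{f b<..<f a} - f ` K = {}"
    hence "{f b<..<f a} \<subseteq> f ` K" by (simp add: Diff_eq_empty_iff)
    thus False using unc countable_subset[OF _ countable_image[OF K]] by auto
  qed
  then obtain y where y0: "y \<in> {f b<..<f a} - f ` K" by blast
  hence y: "f b < y" "y < f a" "y \<notin> f ` K" by auto
  define Z where "Z = {a..b} \<inter> f -` {y..}"
  have "closed Z" unfolding Z_def by (rule continuous_closed_preimage[OF cont]) auto
  hence "compact Z" using compact_Int_closed[OF compact_Icc, of Z a b] unfolding Z_def
    by (simp add: Int_absorb1 inf.assoc)
  moreover have "a \<in> Z" using ab y unfolding Z_def by auto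
  ultimately obtain x0 where x0: "x0 \<in> Z" "\<forall>t\<in>Z. t \<le> x0"
    using compact_attains_sup[of Z] by blast
  have x0ab: "a \<le> x0" "x0 \<le> b" "y \<le> f x0" using x0 unfolding Z_def by auto
  have "continuous_on {x0..b} f" using continuous_on_subset[OF cont] x0ab by auto
  then obtain x where x: "x0 \<le> x" "x \<le> b" "f x = y"
    using IVT2'[of f b y x0] x0ab y by auto
  hence "x \<in> Z" using x0ab unfolding Z_def by auto
  hence "x = x0" using x0 x by force
  hence fx0: "f x0 = y" using x by simp
  have "x0 \<noteq> a" "x0 \<noteq> b" using fx0 y by auto
  moreover have "x0 \<notin> K" using fx0 y by auto
  ultimately obtain d where d: "d > 0" "(f has_real_derivative d) (at x0)"
    using der[of x0] x0ab by force
  obtain \<delta> where \<delta>: "\<delta> > 0" "\<forall>h>0. h < \<delta> \<longrightarrow> f x0 < f (x0 + h)"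
    using DERIV_pos_inc_right[OF d(2) d(1)] by blast
  define h where "h = min (\<delta>/2) (b - x0)"
  have h: "h > 0" "h < \<delta>" "x0 + h \<le> b" using \<delta> \<open>x0 \<noteq> b\<close> x0ab unfolding h_def by auto
  hence "f (x0 + h) > y" using \<delta> fx0 by auto
  hence "x0 + h \<in> Z" using h x0ab unfolding Z_def by auto
  thus False using x0 h by force
qed

lemma mono_countable:
  fixes f f' :: "real \<Rightarrow> real"
  assumes ab: "a \<le> b" and cont: "continuous_on {a..b} f" and K: "countable K"
    and der: "\<And>x. x \<in> {a<..<b} - K \<Longrightarrow> (f has_real_derivative f' x) (at x) \<and> f' x \<ge> 0"
  shows "f a \<le> f b"
proof (rule field_le_epsilon)
  fix e :: real assume e: "e > 0"
  define e' where "e' = e / (b - a + 1)"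
  have e': "e' > 0" using e ab unfolding e'_def by auto
  have "(\<lambda>x. f x + e' * x) a \<le> (\<lambda>x. f x + e' * x) b"
  proof (rule incr_countable[OF ab _ K])
    show "continuous_on {a..b} (\<lambda>x. f x + e' * x)"
      by (intro continuous_intros cont)
    fix x assume "x \<in> {a<..<b} - K"
    hence "(f has_real_derivative f' x) (at x)" "f' x \<ge> 0" using der by auto
    hence "((\<lambda>x. f x + e' * x) has_real_derivative f' x + e' * 1) (at x)"
      by (auto intro!: derivative_eq_intros)
    thus "\<exists>d>0. ((\<lambda>x. f x + e' * x) has_real_derivative d) (at x)"
      using \<open>f' x \<ge> 0\<close> e' by (intro exI[of _ "f' x + e' * 1"]) auto
  qed
  hence "f a \<le> f b + e' * (b - a)" by (simp add: algebra_simps)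
  moreover have "e' * (b - a) \<le> e"
  proof -
    have "e' * (b - a) \<le> e' * (b - a + 1)" using e' by auto
    also have "\<dots> = e" unfolding e'_def using ab by auto
    finally show ?thesis .
  qed
  ultimately show "f a \<le> f b + e" by linarith
qed

lemma affine_countable:
  fixes f :: "real \<Rightarrow> real"
  assumes ab: "a \<le> b" and cont: "continuous_on {a..b} f" and K: "countable K"
    and der: "\<And>x. x \<in> {a<..<b} - K \<Longrightarrow> (f has_real_derivative c) (at x)"
  shows "f b = f a + c * (b - a)"
proof -
  have "(\<lambda>x. f x - c * x) a \<le> (\<lambda>x. f x - c * x) b"
    by (rule mono_countable[OF ab _ K, of _ "\<lambda>_. 0"])
      (auto intro!: continuous_intros cont derivative_eq_intros der)
  moreover have "(\<lambda>x. c * x - f x) a \<le> (\<lambda>x. c * x - f x) b"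
    by (rule mono_countable[OF ab _ K, of _ "\<lambda>_. 0"])
      (auto intro!: continuous_intros cont derivative_eq_intros der)
  ultimately show ?thesis by (simp add: algebra_simps)
qed

lemma sign_pos:
  fixes f :: "real \<Rightarrow> real"
  assumes ab: "a < b" and cont: "continuous_on {a..b} f" and K: "countable K"
    and der: "\<And>x. x \<in> {a<..<b} - K \<Longrightarrow> (f has_real_derivative (- c * sgn (f x))) (at x)"
    and c: "c > 0" and fa: "\<bar>f a\<bar> < c * (b - a)"
  shows "\<not> f b > 0"
proof
  assume fb: "f b > 0"
  define Z where "Z = {a..b} \<inter> f -` {..0}"
  have "closed Z" unfolding Z_def by (rule continuous_closed_preimage[OF cont]) auto
  hence cZ: "compact Z" using compact_Int_closed[OF compact_Icc, of Z a b] unfolding Z_def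
    by (simp add: Int_absorb1 inf.assoc)
  have lin: "f b = f s + (- c) * (b - s)"
    if s: "a \<le> s" "s < b" "\<forall>x\<in>{s<..b}. f x > 0" for s
  proof (rule affine_countable[OF _ _ K])
    show "s \<le> b" using s by simp
    show "continuous_on {s..b} f" using continuous_on_subset[OF cont] s by auto
    fix x assume x: "x \<in> {s<..<b} - K"
    hence "f x > 0" using s by auto
    thus "(f has_real_derivative - c) (at x)" using der[of x] x s by auto
  qed
  show False
  proof (cases "Z = {}")
    case True
    have "\<forall>x\<in>{a<..b}. f x > 0"
    proof
      fix x assume x: "x \<in> {a<..b}"
      show "f x > 0"
      proof (rule ccontr)
        assume "\<not> f x > 0"
        hence "x \<in> Z" using x unfolding Z_def by auto
        thus False using True by auto
      qed
    qed
    hence "f b = f a + (- c) * (b - a)" using lin[of a] ab by auto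
    thus False using fa fb by linarith
  next
    case False
    then obtain s where s: "s \<in> Z" "\<forall>t\<in>Z. t \<le> s" using compact_attains_sup[OF cZ] by blast
    have sab: "a \<le> s" "s \<le> b" "f s \<le> 0" using s unfolding Z_def by auto
    have "s \<noteq> b" using fb sab by auto
    have "\<forall>x\<in>{s<..b}. f x > 0"
    proof
      fix x assume x: "x \<in> {s<..b}"
      show "f x > 0"
      proof (rule ccontr)
        assume "\<not> f x > 0"
        hence "x \<in> Z" using x sab unfolding Z_def by auto
        thus False using s x by force
      qed
    qed
    hence "f b = f s + (- c) * (b - s)" using lin[of s] sab \<open>s \<noteq> b\<close> by auto
    moreover have "c * (b - s) > 0" using c sab \<open>s \<noteq> b\<close> by auto
    ultimately show False using fb sab by linarith
  qed
qed

lemma sign_key: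
  fixes f :: "real \<Rightarrow> real"
  assumes ab: "a < b" and cont: "continuous_on {a..b} f" and K: "countable K"
    and der: "\<And>x. x \<in> {a<..<b} - K \<Longrightarrow> (f has_real_derivative (- c * sgn (f x))) (at x)"
    and c: "c > 0" and fa: "\<bar>f a\<bar> < c * (b - a)"
  shows "f b = 0"
proof -
  have "\<not> f b > 0" by (rule sign_pos[OF ab cont K der c fa])
  moreover have "\<not> (\<lambda>x. - f x) b > 0"
  proof (rule sign_pos[OF ab _ K _ c])
    show "continuous_on {a..b} (\<lambda>x. - f x)" by (intro continuous_intros cont)
    show "\<bar>- f a\<bar> < c * (b - a)" using fa by simp
    fix x assume "x \<in> {a<..<b} - K"
    hence "((\<lambda>x. - f x) has_real_derivative - (- c * sgn (f x))) (at x)"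
      using der by (auto intro!: derivative_eq_intros)
    thus "((\<lambda>x. - f x) has_real_derivative - c * sgn (- f x)) (at x)"
      by (simp add: sgn_minus)
  qed
  ultimately show ?thesis by simp
qed



lemma beta_idx:
  assumes "e < m" "src e < n" "dst e < n"
  shows "beta_of n m src dst \<theta> t $ e = \<theta> t (src e) - \<theta> t (dst e)"
proof -
  have "beta_of n m src dst \<theta> t $ e = (\<Sum>i<n. ((if src e = i then 1 else 0) - (if dst e = i then 1 else 0)) * \<theta> t i)"
    using assms unfolding beta_of_def B_mat_def S_mat_def D_mat_def
    by (simp add: scalar_prod_def lessThan_atLeast0)
  also have "\<dots> = (\<Sum>i<n. (if src e = i then \<theta> t i else 0)) - (\<Sum>i<n. (if dst e = i then \<theta> t i else 0))"
    by (simp only: sum_subtractf[symmetric]) (rule sum.cong, auto)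
  also have "\<dots> = \<theta> t (src e) - \<theta> t (dst e)" using assms by simp
  finally show ?thesis .
qed

lemma dim_beta: "dim_vec (beta_of n m src dst \<theta> t) = m"
  unfolding beta_of_def B_mat_def S_mat_def D_mat_def by simp



theorem theorem2:
  fixes n m :: nat and src dst :: "nat \<Rightarrow> nat"
    and z :: "real vec" and T Ti \<Lambda> \<Lambda>i :: "real mat"
    and \<omega> :: "real vec" and \<theta> :: "real \<Rightarrow> nat \<Rightarrow> real"
    and Tr :: "nat set" and r :: nat and g :: "nat \<Rightarrow> nat"
    and k k2 :: real and tt :: "nat \<Rightarrow> real"
  assumes n_pos: "n \<ge> 1"
    and edges_ok: "\<forall>e<m. src e < n \<and> dst e < n"
    and no_loops: "\<forall>e<m. src e \<noteq> dst e"
    and strong: "strongly_connected n m src dst"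
    (* z: positive left eigenvector of Q for eigenvalue 0, normalised *)
    and z_dim: "z \<in> carrier_vec n"
    and z_pos: "\<forall>i<n. z $ i > 0"
    and z_eig: "transpose_mat (Q_mat n m src dst) *\<^sub>v z = 0\<^sub>v n"
    and z_norm: "(\<Sum>i<n. z $ i) = 1"
    (* decomposition Q = T [0 0; 0 \<Lambda>] T^-1 *)
    and T_dim: "T \<in> carrier_mat n n" and Ti_dim: "Ti \<in> carrier_mat n n"
    and T_inv: "T * Ti = 1\<^sub>m n" "Ti * T = 1\<^sub>m n"
    and T_col: "col T 0 = vec n (\<lambda>_. 1)"
    and Ti_row: "row Ti 0 = z"
    and L_dim: "\<Lambda> \<in> carrier_mat (n - 1) (n - 1)" and Li_dim: "\<Lambda>i \<in> carrier_mat (n - 1) (n - 1)"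
    and L_inv: "\<Lambda> * \<Lambda>i = 1\<^sub>m (n - 1)" "\<Lambda>i * \<Lambda> = 1\<^sub>m (n - 1)"
    and Q_decomp: "Q_mat n m src dst = T * blk0 n \<Lambda> * Ti"
    (* constant vector \<omega>^u *)
    and \<omega>_dim: "\<omega> \<in> carrier_vec n"
    (* dynamics: theta_i continuous, d/dt theta_i = \<omega>_i + c_i(t) except on a countable set *)
    and \<theta>_cont: "\<forall>i<n. continuous_on {0..} (\<lambda>t. \<theta> t i)"
    and \<theta>_ode: "\<exists>K. countable K \<and> (\<forall>t \<in> {0<..} - K. \<forall>i<n.
        ((\<lambda>s. \<theta> s i) has_real_derivative (\<omega> $ i + ctrl n m src dst r g tt k k2 \<theta> i t)) (at t))"
    (* spanning tree and consistent ordering of its edges *)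
    and tree: "out_spanning_tree n m src dst Tr r"
    and g_bij: "bij_betw g {1..n - 1} Tr"
    and g_order: "\<forall>a\<in>{1..n - 1}. \<forall>b\<in>{1..n - 1}. tree_prec src dst Tr (g a) (g b) \<longrightarrow> a < b"
    and k_pos: "k > 0" and k2_pos: "k2 > 0"
    and t_pos: "0 < tt 1"
    and t_mono: "\<forall>j\<in>{1..<n}. tt j < tt (j + 1)"
    and t_gap: "\<forall>j\<in>{1..n - 1}. tt (j + 1) - tt j > \<bar>beta_of n m src dst \<theta> (tt j) $ g j\<bar> / k2"
    (* convergence at time t_1 *)
    and conv_beta: "beta_of n m src dst \<theta> (tt 1) =
        (- (1 / k)) \<cdot>\<^sub>v (transpose_mat (B_mat n m src dst) *\<^sub>v ((T * blk0 n \<Lambda>i * Ti) *\<^sub>v \<omega>))"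
    and conv_y: "\<omega> + k \<cdot>\<^sub>v y_of n m src dst \<theta> (tt 1) = mat n n (\<lambda>(i, j). z $ j) *\<^sub>v \<omega>"
  shows "beta_of n m src dst \<theta> (tt n) = 0\<^sub>v m"
  proof -
  obtain K where K: "countable K" and Kd: "\<forall>t\<in>{0<..} - K. \<forall>i<n.
        ((\<lambda>s. \<theta> s i) has_real_derivative (\<omega> $ i + ctrl n m src dst r g tt k k2 \<theta> i t)) (at t)"
    using \<theta>_ode by blast
  define c0 where "c0 = (\<Sum>j<n. z $ j * \<omega> $ j)"
  have dimy: "dim_vec (y_of n m src dst \<theta> t) = n" for t
    unfolding y_of_def D_mat_def by simp
  have drift: "\<omega> $ i + k * (y_of n m src dst \<theta> (tt 1) $ i) = c0" if i: "i < n" for i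
  proof -
    have "(\<omega> + k \<cdot>\<^sub>v y_of n m src dst \<theta> (tt 1)) $ i = (mat n n (\<lambda>(i, j). z $ j) *\<^sub>v \<omega>) $ i"
      using conv_y by simp
    thus ?thesis using i \<omega>_dim dimy unfolding c0_def
      by (simp add: scalar_prod_def lessThan_atLeast0)
  qed
  have tt_lt': "\<forall>a. 1 \<le> a \<longrightarrow> a < b \<longrightarrow> b \<le> n \<longrightarrow> tt a < tt b" for b
  proof (induction b)
    case 0 then show ?case by simp
  next
    case (Suc b)
    show ?case
    proof (intro allI impI)
      fix a assume a: "1 \<le> a" "a < Suc b" "Suc b \<le> n"
      have "tt b < tt (b + 1)" using t_mono a by auto
      moreover have "a < b \<Longrightarrow> tt a < tt b" using Suc.IH a by auto
      ultimately show "tt a < tt (Suc b)" using a by (cases "a = b") auto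
    qed
  qed
  have tt_le: "tt a \<le> tt b" if "1 \<le> a" "a \<le> b" "b \<le> n" for a b
    using tt_lt'[of b] that by (cases "a = b") (auto simp: less_imp_le)
  from tree have Tr_sub: "Tr \<subseteq> {..<m}" and Tr_card: "card Tr = n - 1" and r_n: "r < n"
    and reach: "\<forall>i<n. (r, i) \<in> (edge_rel src dst Tr)\<^sup>*"
    and uniq: "\<forall>i<n. i \<noteq> r \<longrightarrow> (\<exists>!e. e \<in> Tr \<and> dst e = i)"
    unfolding out_spanning_tree_def by auto
  have Tr_fin: "finite Tr" using Tr_sub finite_subset by blast
  have Tr_nd: "src e < n" "dst e < n" "src e \<noteq> dst e" if "e \<in> Tr" for e
    using that Tr_sub edges_ok no_loops by auto
  define h where "h i = (THE e. e \<in> Tr \<and> dst e = i)" for i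
  have h: "h i \<in> Tr \<and> dst (h i) = i" if "i < n" "i \<noteq> r" for i
    unfolding h_def using theI'[OF uniq[rule_format, OF that]] .
  have hinj: "inj_on h ({..<n} - {r})"
    by (rule inj_onI) (metis DiffE h insertI1 lessThan_iff)
  have "h ` ({..<n} - {r}) \<subseteq> Tr" using h by auto
  moreover have "card (h ` ({..<n} - {r})) = card Tr"
    using card_image[OF hinj] r_n Tr_card by simp
  ultimately have himg: "h ` ({..<n} - {r}) = Tr" using card_subset_eq[OF Tr_fin] by blast
  have dst_nr: "dst e \<noteq> r" if eT: "e \<in> Tr" for e
  proof -
    obtain i where "i \<in> {..<n} - {r}" "e = h i" using himg eT by blast
    thus ?thesis using h by auto
  qed
  have dst_inj: "e1 = e2" if e12: "e1 \<in> Tr" "e2 \<in> Tr" "dst e1 = dst e2" for e1 e2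
  proof -
    have "dst e1 < n" "dst e1 \<noteq> r" using Tr_nd(2)[OF e12(1)] dst_nr[OF e12(1)] by auto
    hence "\<exists>!e. e \<in> Tr \<and> dst e = dst e1" using uniq by blast
    thus ?thesis using e12 by auto
  qed
  have gimg: "g ` {1..n - 1} = Tr" and ginj: "inj_on g {1..n - 1}"
    using g_bij unfolding bij_betw_def by auto
  have gTr: "g j \<in> Tr" if "j \<in> {1..n - 1}" for j using gimg that by blast
  have dstg_inj: "a = b" if "a \<in> {1..n - 1}" "b \<in> {1..n - 1}" "dst (g a) = dst (g b)" for a b
    using dst_inj[OF gTr gTr] that ginj inj_on_def by metis
  have jidx_eq: "jidx n dst g (dst (g j)) = j" if j: "j \<in> {1..n - 1}" for j
    unfolding jidx_def by (rule the_equality) (use j dstg_inj in auto)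
  have jidx_ex: "\<exists>j\<in>{1..n - 1}. dst (g j) = v" if vv: "v < n" "v \<noteq> r" for v
  proof -
    obtain e where "e \<in> Tr" "dst e = v" using uniq vv by blast
    thus ?thesis using gimg by blast
  qed
  have ctrl_other: "ctrl n m src dst r g tt k k2 \<theta> v t = k * (y_of n m src dst \<theta> (tt 1) $ v)"
    if j: "j \<in> {1..n - 1}" and v: "v < n" "v \<noteq> dst (g j)" and t: "tt j < t" "t < tt (j + 1)" for j v t
  proof -
    have t1: "\<not> t < tt 1"
    proof -
      have "tt 1 \<le> tt j" by (rule tt_le) (use j in auto)
      thus ?thesis using t by simp
    qed
    show ?thesis
    proof (cases "v = r")
      case True then show ?thesis using t1 unfolding ctrl_def by simp
    next
      case False
      then obtain j' where j': "j' \<in> {1..n - 1}" "dst (g j') = v" using jidx_ex v by blast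
      hence jv: "jidx n dst g v = j'" using jidx_eq by blast
      have "\<not> (tt j' \<le> t \<and> t < tt (j' + 1))"
      proof
        assume w: "tt j' \<le> t \<and> t < tt (j' + 1)"
        consider "j' < j" | "j < j'" | "j' = j" by linarith
        thus False
        proof cases
          case 1
          have "tt (j' + 1) \<le> tt j" by (rule tt_le) (use j j' 1 in auto)
          thus False using w t by simp
        next
          case 2
          have "tt (j + 1) \<le> tt j'" by (rule tt_le) (use j j' 2 in auto)
          thus False using w t by simp
        next
          case 3 thus False using j' v by auto
        qed
      qed
      thus ?thesis using t1 jv unfolding ctrl_def by auto
    qed
  qed
  have ctrl_self: "ctrl n m src dst r g tt k k2 \<theta> (dst (g j)) t = k * (y_of n m src dst \<theta> (tt 1) $ (dst (g j)))
       + k2 * sgn (\<theta> t (src (g j)) - \<theta> t (dst (g j)))"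
    if j: "j \<in> {1..n - 1}" and t: "tt j < t" "t < tt (j + 1)" for j t
  proof -
    have t1: "\<not> t < tt 1"
    proof -
      have "tt 1 \<le> tt j" by (rule tt_le) (use j in auto)
      thus ?thesis using t by simp
    qed
    have "beta_of n m src dst \<theta> t $ g j = \<theta> t (src (g j)) - \<theta> t (dst (g j))"
      using beta_idx Tr_nd gTr[OF j] Tr_sub by blast
    thus ?thesis using t1 t jidx_eq[OF j] dst_nr[OF gTr[OF j]] unfolding ctrl_def by auto
  qed
  have tpos: "t > 0" if "j \<in> {1..n - 1}" "tt j < t" for j t
  proof -
    have "tt 1 \<le> tt j" by (rule tt_le) (use that in auto)
    thus ?thesis using that t_pos by simp
  qed
  have der_other: "((\<lambda>s. \<theta> s v) has_real_derivative c0) (at t)"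
    if j: "j \<in> {1..n - 1}" and v: "v < n" "v \<noteq> dst (g j)" and t: "t \<in> {tt j<..<tt (j + 1)} - K" for j v t
    using Kd[rule_format, of t v] tpos[OF j, of t] t ctrl_other[OF j v, of t] drift[OF v(1)] v by auto
  have der_self: "((\<lambda>s. \<theta> s (dst (g j))) has_real_derivative
        c0 + k2 * sgn (\<theta> t (src (g j)) - \<theta> t (dst (g j)))) (at t)"
    if j: "j \<in> {1..n - 1}" and t: "t \<in> {tt j<..<tt (j + 1)} - K" for j t
  proof -
    have v: "dst (g j) < n" using Tr_nd gTr[OF j] by blast
    show ?thesis
      using Kd[rule_format, of t "dst (g j)"] tpos[OF j, of t] t ctrl_self[OF j, of t] drift[OF v] v
      by (auto simp: algebra_simps)
  qed
  have contv: "continuous_on {tt j..tt (j + 1)} (\<lambda>s. \<theta> s v)" if "j \<in> {1..n - 1}" "v < n" for j v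
  proof -
    have "tt 1 \<le> tt j" by (rule tt_le) (use that in auto)
    thus ?thesis using continuous_on_subset[OF \<theta>_cont[rule_format, OF that(2)]] t_pos by auto
  qed
  have P: "\<forall>a. 1 \<le> a \<longrightarrow> a < j \<longrightarrow> \<theta> (tt j) (src (g a)) = \<theta> (tt j) (dst (g a))"
    if "1 \<le> j" "j \<le> n" for j
    using that
  proof (induction j)
    case 0 then show ?case by simp
  next
    case (Suc j)
    show ?case
    proof (cases "j = 0")
      case True then show ?thesis by simp
    next
      case False
      hence j: "j \<in> {1..n - 1}" using Suc.prems by auto
      have IH: "\<forall>a. 1 \<le> a \<longrightarrow> a < j \<longrightarrow> \<theta> (tt j) (src (g a)) = \<theta> (tt j) (dst (g a))"
        using Suc.IH Suc.prems False by auto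
      have ttlt: "tt j < tt (j + 1)" using t_mono j by auto
      show ?thesis
      proof (intro allI impI)
        fix a assume a: "1 \<le> a" "a < Suc j"
        have aj: "a \<in> {1..n - 1}" using a j by auto
        define u where "u = src (g a)"
        define w where "w = dst (g a)"
        have uw: "u < n" "w < n" using Tr_nd gTr[OF aj] unfolding u_def w_def by auto
        define f where "f = (\<lambda>s. \<theta> s u - \<theta> s w)"
        have contf: "continuous_on {tt j..tt (j + 1)} f"
          unfolding f_def by (intro continuous_intros contv[OF j] uw)
        have "f (tt (j + 1)) = 0"
        proof (cases "a < j")
          case True
          have wn: "w \<noteq> dst (g j)" using dstg_inj[OF aj j] True unfolding w_def by auto
          have un: "u \<noteq> dst (g j)"
          proof
            assume "u = dst (g j)"
            hence "(dst (g j), dst (g a)) \<in> edge_rel src dst Tr"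
              unfolding edge_rel_def u_def using gTr[OF aj] by force
            hence "tree_prec src dst Tr (g j) (g a)" unfolding tree_prec_def by auto
            hence "j < a" using g_order aj j by blast
            thus False using True by simp
          qed
          have "f (tt (j + 1)) = f (tt j) + 0 * (tt (j + 1) - tt j)"
          proof (rule affine_countable[OF _ contf K])
            show "tt j \<le> tt (j + 1)" using ttlt by simp
            fix x assume x: "x \<in> {tt j<..<tt (j + 1)} - K"
            have "(f has_real_derivative c0 - c0) (at x)"
              unfolding f_def by (intro DERIV_diff der_other[OF j] uw un wn x)
            thus "(f has_real_derivative 0) (at x)" by simp
          qed
          moreover have "f (tt j) = 0" using IH a True unfolding f_def u_def w_def by auto
          ultimately show ?thesis by simp
        next
          case False
          hence aeq: "a = j" using a by simp
          show ?thesis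
          proof (rule sign_key[OF ttlt contf K _ k2_pos])
            fix x assume x: "x \<in> {tt j<..<tt (j + 1)} - K"
            have un: "u \<noteq> dst (g j)" using Tr_nd(3)[OF gTr[OF j]] aeq unfolding u_def by simp
            have "(f has_real_derivative c0 - (c0 + k2 * sgn (\<theta> x u - \<theta> x w))) (at x)"
              unfolding f_def using DERIV_diff[OF der_other[OF j uw(1) un x] der_self[OF j x]]
              aeq u_def w_def by simp
            thus "(f has_real_derivative - k2 * sgn (f x)) (at x)" unfolding f_def by simp
          next
            have "beta_of n m src dst \<theta> (tt j) $ g j = f (tt j)"
              unfolding f_def u_def w_def aeq using beta_idx Tr_nd gTr[OF j] Tr_sub by blast
            moreover have "tt (j + 1) - tt j > \<bar>beta_of n m src dst \<theta> (tt j) $ g j\<bar> / k2"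
              using t_gap j by blast
            ultimately have "tt (j + 1) - tt j > \<bar>f (tt j)\<bar> / k2" by simp
            thus "\<bar>f (tt j)\<bar> < k2 * (tt (j + 1) - tt j)" using k2_pos
              by (simp add: pos_divide_less_eq mult.commute)
          qed
        qed
        thus "\<theta> (tt (Suc j)) (src (g a)) = \<theta> (tt (Suc j)) (dst (g a))"
          unfolding f_def u_def w_def by simp
      qed
    qed
  qed
  have Pn: "\<forall>a. 1 \<le> a \<longrightarrow> a < n \<longrightarrow> \<theta> (tt n) (src (g a)) = \<theta> (tt n) (dst (g a))"
    using P[of n] n_pos by simp
  have allr: "\<theta> (tt n) v = \<theta> (tt n) r" if "(r, v) \<in> (edge_rel src dst Tr)\<^sup>*" for v
    using that
  proof (induction rule: rtrancl_induct)
    case base then show ?case by simp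
  next
    case (step x y)
    then obtain e where e: "e \<in> Tr" "x = src e" "y = dst e" unfolding edge_rel_def by auto
    then obtain a where "a \<in> {1..n - 1}" "e = g a" using gimg by blast
    hence "\<theta> (tt n) x = \<theta> (tt n) y" using Pn e n_pos by auto
    thus ?case using step by simp
  qed
  show ?thesis
  proof (rule eq_vecI)
    show "dim_vec (beta_of n m src dst \<theta> (tt n)) = dim_vec (0\<^sub>v m)" by (simp add: dim_beta)
    fix e assume "e < dim_vec (0\<^sub>v m)"
    hence e: "e < m" by simp
    have se: "src e < n" "dst e < n" using edges_ok e by auto
    have "\<theta> (tt n) (src e) = \<theta> (tt n) r" using allr reach se by blast
    moreover have "\<theta> (tt n) (dst e) = \<theta> (tt n) r" using allr reach se by blast
    moreover have "beta_of n m src dst \<theta> (tt n) $ e = \<theta> (tt n) (src e) - \<theta> (tt n) (dst e)"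
      using e se by (rule beta_idx)
    ultimately show "beta_of n m src dst \<theta> (tt n) $ e = 0\<^sub>v m $ e" using e by simp
  qed
qed

end
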